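(* Let $m,k$ be integers with $1\le k\le m$. Let $p$ be a real polynomial of degree at most $2m-k-1$ and $q$ a real polynomial of degree at most $k-1$. Let $t_1,\dots,t_m$ be distinct numbers in $(0,1)$ such that for all $i=1,\dots,m$, $$p^{\mathrm{even}}(t_i)+q^{\mathrm{odd}}(t_i)(1-t_i^2)^{m-k}=0\quad\text{and}\quad p^{\mathrm{odd}}(t_i)+q^{\mathrm{even}}(t_i)(1-t_i^2)^{m-k}=0.$$ Then $p\equiv0$ and $q\equiv0$.
   Context: For a polynomial $p(t)=\sum_{j=0}^N c_jt^j$, $p^{\mathrm{even}}(t)=\sum_{2j\le N}c_{2j}t^{2j}$ and $p^{\mathrm{odd}}(t)=\sum_{1\le 2j-1\le N}c_{2j-1}t^{2j-1}$. *)

theory Defs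
  imports "HOL-Computational_Algebra.Polynomial"
begin

definition poly_even :: "'a::comm_ring_1 poly \<Rightarrow> 'a poly" where
  "poly_even p = (\<Sum>j\<le>degree p. if even j then monom (coeff p j) j else 0)"

definition poly_odd :: "'a::comm_ring_1 poly \<Rightarrow> 'a poly" where
  "poly_odd p = (\<Sum>j\<le>degree p. if odd j then monom (coeff p j) j else 0)"

end

theory Submission
  imports Defs
begin

lemma rolle_many:
  fixes f f' :: "real \<Rightarrow> real"
  assumes der: "\<And>x. a < x \<Longrightarrow> x < b \<Longrightarrow> (f has_real_derivative f' x) (at x)"
  shows "finite R \<Longrightarrow> R \<subseteq> {a<..<b} \<Longrightarrow> card R = Suc r \<Longrightarrow> (\<forall>x\<in>R. f x = 0) \<Longrightarrow>
    \<exists>R'. finite R' \<and> R' \<subseteq> {a<..<b} \<and> card R' = r \<and> (\<forall>x\<in>R'. f' x = 0) \<and> (\<forall>x\<in>R'. x < Max R)"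
proof (induction r arbitrary: R)
  case 0
  then show ?case by (intro exI[of _ "{}"]) auto
next
  case (Suc r)
  define M where "M = Max R"
  have ne: "R \<noteq> {}" using Suc.prems(3) by auto
  have MR: "M \<in> R" using Max_in[OF Suc.prems(1) ne] M_def by simp
  define R0 where "R0 = R - {M}"
  have c0: "card R0 = Suc r" using Suc.prems(3) MR Suc.prems(1) R0_def by simp
  have fin0: "finite R0" using Suc.prems(1) R0_def by simp
  have ne0: "R0 \<noteq> {}" using c0 by auto
  define M0 where "M0 = Max R0"
  have M0R0: "M0 \<in> R0" using Max_in[OF fin0 ne0] M0_def by simp
  have "M0 \<le> M" using M0R0 R0_def M_def Suc.prems(1) by simp
  moreover have "M0 \<noteq> M" using M0R0 R0_def by auto
  ultimately have lt: "M0 < M" by simp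
  obtain R0' where R0': "finite R0'" "R0' \<subseteq> {a<..<b}" "card R0' = r" "\<forall>x\<in>R0'. f' x = 0"
      "\<forall>x\<in>R0'. x < M0"
    using Suc.IH[OF fin0 _ c0] Suc.prems R0_def M0_def by auto
  have inab: "a < M0" "M < b" using M0R0 MR R0_def Suc.prems(2) by auto
  have cont: "continuous_on {M0..M} f"
    apply (rule continuous_at_imp_continuous_on)
    using der inab DERIV_isCont by (metis atLeastAtMost_iff less_le_trans le_less_trans)
  have "\<exists>z. M0 < z \<and> z < M \<and> DERIV f z :> 0"
    apply (rule Rolle[OF lt])
    using M0R0 MR Suc.prems(4) R0_def apply auto[1]
     apply (rule cont)
    using der inab real_differentiable_def by (meson less_trans)
  then obtain z where z: "M0 < z" "z < M" "DERIV f z :> 0" by blast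
  have fz: "f' z = 0" using DERIV_unique[OF der z(3)] z inab by auto
  have znot: "z \<notin> R0'" using R0'(5) z(1) by fastforce
  show ?case
    apply (rule exI[of _ "insert z R0'"])
    using R0' z inab fz M_def znot by auto
qed


definition Eop :: "nat \<Rightarrow> real poly \<Rightarrow> real poly" where
  "Eop c H = pCons 0 (pderiv H) - smult (of_nat c) H"

lemma coeff_Eop: "coeff (Eop c H) e = (real e - real c) * coeff H e"
  by (cases e) (auto simp: Eop_def coeff_pderiv algebra_simps)

lemma poly_Eop: "poly (Eop c H) y = y * poly (pderiv H) y - real c * poly H y"
  by (simp add: Eop_def)

lemma deriv_Eop:
  assumes "(y::real) > 0"
  shows "((\<lambda>y. poly H y / y^c) has_real_derivative poly (Eop c H) y / y^(Suc c)) (at y)"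
proof -
  have "((\<lambda>y. poly H y / y^c) has_real_derivative
      (poly (pderiv H) y * y^c - poly H y * (real c * y^(c - 1))) / (y^c * y^c)) (at y)"
    by (rule DERIV_divide) (use assms in \<open>auto intro: DERIV_pow\<close>)
  moreover have "(poly (pderiv H) y * y^c - poly H y * (real c * y^(c - 1))) / (y^c * y^c)
      = poly (Eop c H) y / y^(Suc c)"
  proof (cases c)
    case 0
    then show ?thesis using assms by (simp add: poly_Eop field_simps)
  next
    case (Suc d)
    then show ?thesis using assms by (simp add: poly_Eop field_simps)
  qed
  ultimately show ?thesis by simp
qed

lemma poly_rolle:
  assumes "finite R" "R \<subseteq> {a<..<b}" "0 \<le> a" "card R = Suc r" "\<forall>x\<in>R. poly H x = 0"
  shows "\<exists>R'. finite R' \<and> R' \<subseteq> {a<..<b} \<and> card R' = r \<and> (\<forall>x\<in>R'. poly (Eop c H) x = 0)"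
proof -
  have der: "\<And>x. a < x \<Longrightarrow> x < b \<Longrightarrow> ((\<lambda>y. poly H y / y^c) has_real_derivative
       (\<lambda>y. poly (Eop c H) y / y^(Suc c)) x) (at x)"
    using deriv_Eop assms(3) by auto
  obtain R' where R': "finite R'" "R' \<subseteq> {a<..<b}" "card R' = r"
      "\<forall>x\<in>R'. poly (Eop c H) x / x^(Suc c) = 0"
    using rolle_many[OF der assms(1,2,4)] assms(5) by auto
  have "\<forall>x\<in>R'. poly (Eop c H) x = 0"
  proof
    fix x assume "x \<in> R'"
    then have "x > 0" using R'(2) assms(3) by auto
    then show "poly (Eop c H) x = 0" using R'(4) \<open>x \<in> R'\<close> by auto
  qed
  then show ?thesis using R' by blast
qed


lemma sparse:
  "finite S \<Longrightarrow> (\<forall>e. e \<notin> S \<longrightarrow> coeff H e = 0) \<Longrightarrow> finite R \<Longrightarrow> R \<subseteq> {0<..} \<Longrightarrow>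
    card S \<le> card R \<Longrightarrow> (\<forall>y\<in>R. poly H y = 0) \<Longrightarrow> (H::real poly) = 0"
proof (induction S arbitrary: H R rule: finite_induct)
  case empty
  then show ?case by (intro poly_eqI) auto
next
  case (insert c S)
  have "Suc (card S) \<le> card R" using insert by simp
  then obtain R1 where R1: "R1 \<subseteq> R" "card R1 = Suc (card S)"
    by (meson obtain_subset_with_card_n)
  have fin1: "finite R1" using R1(1) insert.prems(2) finite_subset by auto
  have sub1: "R1 \<subseteq> {0<..<Max R + 1}"
  proof
    fix x assume "x \<in> R1"
    then have "x \<in> R" using R1 by auto
    then have "x \<le> Max R" "0 < x" using insert.prems(2,3) Max_ge[of R x] by auto
    then show "x \<in> {0<..<Max R + 1}" by simp
  qed
  obtain R' where R': "finite R'" "R' \<subseteq> {0<..<Max R + 1}" "card R' = card S"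
      "\<forall>x\<in>R'. poly (Eop c H) x = 0"
    using poly_rolle[OF fin1 sub1 _ R1(2), of H c] R1(1) insert.prems(5) by auto
  have E0: "Eop c H = 0"
    apply (rule insert.IH[of _ R'])
    using insert.prems(1) R' by (auto simp: coeff_Eop)
  have cz: "\<And>e. e \<noteq> c \<Longrightarrow> coeff H e = 0"
  proof -
    fix e assume "e \<noteq> c"
    have "(real e - real c) * coeff H e = 0" using E0 coeff_Eop[of c H e] by simp
    then show "coeff H e = 0" using \<open>e \<noteq> c\<close> by simp
  qed
  have Hm: "H = monom (coeff H c) c"
    by (rule poly_eqI) (auto simp: coeff_monom cz)
  obtain y where y: "y \<in> R1" using R1(2) by (metis card.empty ex_in_conv nat.distinct(1))
  have "y > 0" "poly H y = 0" using y sub1 R1(1) insert.prems(5) by auto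
  then have "coeff H c * y ^ c = 0" using Hm by (metis poly_monom)
  then have "coeff H c = 0" using \<open>y > 0\<close> by simp
  then show ?case using Hm by simp
qed


fun Ech :: "nat \<Rightarrow> nat \<Rightarrow> real poly \<Rightarrow> real poly" where
  "Ech n 0 H = H"
| "Ech n (Suc j) H = Eop (n + j) (Ech n j H)"

lemma coeff_Ech: "coeff (Ech n j H) e = (\<Prod>i<j. real e - real (n + i)) * coeff H e"
  by (induction j) (auto simp: coeff_Eop)

lemma chain_roots:
  assumes "finite R" "R \<subseteq> {a<..<b}" "0 \<le> a" "\<forall>x\<in>R. poly H x = 0"
  shows "card R = r + j \<Longrightarrow> \<exists>R'. finite R' \<and> R' \<subseteq> {a<..<b} \<and> card R' = r \<and>
      (\<forall>x\<in>R'. poly (Ech n j H) x = 0)"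
proof (induction j arbitrary: r)
  case 0
  then show ?case using assms by auto
next
  case (Suc j)
  obtain R'' where R'': "finite R''" "R'' \<subseteq> {a<..<b}" "card R'' = Suc r"
      "\<forall>x\<in>R''. poly (Ech n j H) x = 0"
    using Suc.IH[of "Suc r"] Suc.prems by auto
  show ?case using poly_rolle[OF R''(1,2) assms(3) R''(3,4), of "n + j"] by simp
qed

lemma core:
  fixes F G :: "real poly"
  assumes k: "1 \<le> k" and dF: "degree F \<le> 2*n+k-1" and dG: "degree G \<le> 2*n+k-1"
    and cFG: "\<And>e. e < n \<or> n + k \<le> e \<Longrightarrow> coeff F e = coeff G e"
    and R1: "finite R1" "card R1 = n+k" "R1 \<subseteq> {0<..<1}" "\<forall>y\<in>R1. poly F y = 0"
    and R2: "finite R2" "card R2 = n+k" "R2 \<subseteq> {1<..}" "\<forall>y\<in>R2. poly G y = 0"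
  shows "F = 0 \<and> G = 0"
proof -
  define lam where "lam e = (\<Prod>i<k. real e - real (n + i))" for e
  have lam0: "lam e = 0" if "n \<le> e" "e < n + k" for e
    unfolding lam_def using that by (intro prod_zero) (auto intro!: bexI[of _ "e - n"])
  have lamnz: "lam e \<noteq> 0" if "e < n \<or> n + k \<le> e" for e
    unfolding lam_def using that by (auto simp: prod_zero_iff)
  define P where "P = Ech n k F"
  have cP: "coeff P e = lam e * coeff F e" for e
    unfolding P_def lam_def coeff_Ech ..
  have PG: "Ech n k G = P"
  proof (rule poly_eqI)
    fix e
    show "coeff (Ech n k G) e = coeff P e"
      using cFG[of e] lam0[of e] unfolding cP coeff_Ech lam_def[symmetric]
      by (cases "e < n \<or> n + k \<le> e") auto
  qed
  obtain Q1 where Q1: "finite Q1" "Q1 \<subseteq> {0<..<1}" "card Q1 = n" "\<forall>x\<in>Q1. poly P x = 0"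
    using chain_roots[OF R1(1,3) _ R1(4), of n k n] R1(2) unfolding P_def by auto
  have R2s: "R2 \<subseteq> {1<..<Max R2 + 1}"
  proof
    fix x assume "x \<in> R2"
    then have "x \<le> Max R2" "1 < x" using R2(1,3) Max_ge[of R2 x] by auto
    then show "x \<in> {1<..<Max R2 + 1}" by simp
  qed
  obtain Q2 where Q2: "finite Q2" "Q2 \<subseteq> {1<..<Max R2 + 1}" "card Q2 = n"
      "\<forall>x\<in>Q2. poly P x = 0"
    using chain_roots[OF R2(1) R2s _ R2(4), of n k n] R2(2) PG by auto
  have disj: "Q1 \<inter> Q2 = {}" using Q1(2) Q2(2) by force
  have cQ: "card (Q1 \<union> Q2) = 2 * n" using card_Un_disjoint[OF Q1(1) Q2(1) disj] Q1 Q2 by simp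
  define S where "S = {..<n} \<union> {n+k..2*n+k-1}"
  have cS: "card S = 2 * n"
  proof -
    have "card S = card {..<n} + card {n+k..2*n+k-1}"
      unfolding S_def by (rule card_Un_disjoint) auto
    then show ?thesis using k by simp
  qed
  have P0: "P = 0"
  proof (rule sparse[of S _ "Q1 \<union> Q2"])
    show "finite S" unfolding S_def by simp
    show "\<forall>e. e \<notin> S \<longrightarrow> coeff P e = 0"
    proof (intro allI impI)
      fix e assume "e \<notin> S"
      then have "(n \<le> e \<and> e < n + k) \<or> 2*n+k-1 < e" unfolding S_def by auto
      then show "coeff P e = 0"
      proof
        assume "n \<le> e \<and> e < n + k" then show ?thesis using lam0 cP by simp
      next
        assume "2*n+k-1 < e" then have "coeff F e = 0" using dF by (intro coeff_eq_0) simp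
        then show ?thesis using cP by simp
      qed
    qed
    show "finite (Q1 \<union> Q2)" using Q1 Q2 by simp
    show "Q1 \<union> Q2 \<subseteq> {0<..}" using Q1(2) Q2(2) by force
    show "card S \<le> card (Q1 \<union> Q2)" using cS cQ by simp
    show "\<forall>y\<in>Q1 \<union> Q2. poly P y = 0" using Q1 Q2 by auto
  qed
  have cF: "coeff F e = 0" if "e < n \<or> n + k \<le> e" for e
    using cP[of e] P0 lamnz[OF that] by simp
  have cG: "coeff G e = 0" if "e < n \<or> n + k \<le> e" for e
    using cF[OF that] cFG[OF that] by simp
  have F0: "F = 0"
    apply (rule sparse[of "{n..<n+k}" _ R1])
    using cF R1 by force+
  have G0: "G = 0"
    apply (rule sparse[of "{n..<n+k}" _ R2])
    using cG R2 by force+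
  show ?thesis using F0 G0 by simp
qed


definition Mob :: "nat \<Rightarrow> real poly \<Rightarrow> real poly" where
  "Mob N g = (\<Sum>j\<le>N. smult (coeff g j) ([:1,-1:]^j * [:1,1:]^(N-j)))"

lemma poly_upto:
  fixes g :: "real poly"
  assumes "degree g \<le> N"
  shows "poly g x = (\<Sum>i\<le>N. coeff g i * x ^ i)"
proof -
  have "poly g x = poly (\<Sum>i\<le>N. monom (coeff g i) i) x"
    using poly_as_sum_of_monoms'[OF assms] by simp
  also have "\<dots> = (\<Sum>i\<le>N. coeff g i * x ^ i)" by (simp add: poly_sum poly_monom)
  finally show ?thesis .
qed

lemma poly_Mob:
  assumes "degree g \<le> N" "(y::real) \<noteq> -1"
  shows "poly (Mob N g) y = (1+y)^N * poly g ((1-y)/(1+y))"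
proof -
  have ny: "1 + y \<noteq> 0" using assms(2) by (metis add.commute add_eq_0_iff)
  have "poly (Mob N g) y = (\<Sum>j\<le>N. coeff g j * ((1-y)^j * (1+y)^(N-j)))"
    by (simp add: Mob_def poly_sum)
  also have "\<dots> = (\<Sum>j\<le>N. (1+y)^N * (coeff g j * ((1-y)/(1+y))^j))"
  proof (rule sum.cong)
    fix j assume "j \<in> {..N}"
    then have "(1+y)^N = (1+y)^j * (1+y)^(N-j)" by (simp add: power_add[symmetric])
    then show "coeff g j * ((1-y)^j * (1+y)^(N-j)) = (1+y)^N * (coeff g j * ((1-y)/(1+y))^j)"
      using ny by (simp add: power_divide field_simps)
  qed simp
  also have "\<dots> = (1+y)^N * poly g ((1-y)/(1+y))"
    by (simp add: poly_upto[OF assms(1)] sum_distrib_left)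
  finally show ?thesis .
qed

lemma degree_Mob: "degree (Mob N g) \<le> N"
  unfolding Mob_def
proof (rule degree_sum_le)
  fix j assume "j \<in> {..N}"
  have "degree ([:1,-1:]^j * [:1,1::real:]^(N-j)) \<le> degree ([:1,-1::real:]^j) + degree ([:1,1::real:]^(N-j))"
    by (rule degree_mult_le)
  also have "\<dots> \<le> 1 * j + 1 * (N - j)"
    by (intro add_mono order_trans[OF degree_power_le]) auto
  finally have "degree ([:1,-1:]^j * [:1,1::real:]^(N-j)) \<le> N" using \<open>j \<in> {..N}\<close> by simp
  then show "degree (smult (coeff g j) ([:1,-1:]^j * [:1,1:]^(N-j))) \<le> N"
    by (meson degree_smult_le order_trans)
qed simp

lemma Mob_add: "Mob N (f + g) = Mob N f + Mob N g"
  by (simp add: Mob_def smult_add_left sum.distrib)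

lemma Mob_diff: "Mob N (f - g) = Mob N f - Mob N g"
  by (simp add: Mob_def smult_diff_left sum_subtractf)

lemma poly_eq_off:
  fixes P Q :: "real poly"
  assumes "\<And>y. y \<noteq> -1 \<Longrightarrow> poly P y = poly Q y"
  shows "P = Q"
proof (rule ccontr)
  assume "P \<noteq> Q"
  then have "P - Q \<noteq> 0" by simp
  then have fin: "finite {x. poly (P - Q) x = 0}" by (rule poly_roots_finite)
  have "UNIV - {-1} \<subseteq> {x. poly (P - Q) x = 0}" using assms by auto
  then have "finite (UNIV - {-1::real})" using fin finite_subset by blast
  then show False using infinite_UNIV_char_0[where 'a=real] by simp
qed

lemma Mob_inj:
  assumes "degree g \<le> N" "Mob N g = 0"
  shows "g = 0"
proof (rule poly_eq_off)
  fix x :: real assume x: "x \<noteq> -1"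
  have nx: "1 + x \<noteq> 0" using x by (metis add.commute add_eq_0_iff)
  define y where "y = (1-x)/(1+x)"
  have ny: "1 + y \<noteq> 0"
  proof
    assume "1 + y = 0"
    then have "(1+x) + (1-x) = 0" using nx unfolding y_def by (simp add: field_simps)
    then show False by simp
  qed
  have y1: "y \<noteq> -1" using ny by auto
  have xy: "(1-y)/(1+y) = x" using nx ny unfolding y_def by (simp add: field_simps)
  have "(1+y)^N * poly g x = 0" using poly_Mob[OF assms(1) y1] assms(2) xy by simp
  then show "poly g x = poly 0 x" using ny by simp
qed

lemma Mob_w:
  fixes q :: "real poly"
  assumes "degree q \<le> k - 1" "N = 2*n+k-1" "1 \<le> k"
  shows "Mob N (q * [:1,0,-1:]^n) = smult (4^n) (monom 1 n * Mob (k-1) q)"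
proof (rule poly_eq_off)
  fix y :: real assume y: "y \<noteq> -1"
  have ny: "1 + y \<noteq> 0" using y by (metis add.commute add_eq_0_iff)
  have dw: "degree ([:1,0,-1::real:]^n) \<le> 2 * n"
    using degree_power_le[of "[:1,0,-1::real:]" n] by simp
  have dqw: "degree (q * [:1,0,-1:]^n) \<le> N"
    using degree_mult_le[of q "[:1,0,-1:]^n"] dw assms by linarith
  define x where "x = (1-y)/(1+y)"
  have "1 - x^2 = ((1+y)^2 - (1-y)^2)/(1+y)^2" unfolding x_def using ny
    by (simp add: power_divide field_simps)
  also have "(1+y)^2 - (1-y)^2 = 4*y" by (simp add: power2_eq_square algebra_simps)
  finally have wx: "1 - x^2 = 4*y/(1+y)^2" .
  have pw: "poly ([:1,0,-1:]^n) x = (1 - x^2)^n" by (simp add: power2_eq_square)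
  have NN: "(1+y)^N = ((1+y)^2)^n * (1+y)^(k-1)"
    using assms(2,3) by (simp add: power_add[symmetric] power_mult[symmetric])
  have "poly (Mob N (q * [:1,0,-1:]^n)) y = (1+y)^N * (poly q x * (4*y/(1+y)^2)^n)"
    using poly_Mob[OF dqw y] pw wx unfolding x_def by simp
  also have "\<dots> = 4^n * y^n * ((1+y)^(k-1) * poly q x)"
    unfolding NN using ny by (simp add: power_divide power_mult_distrib field_simps)
  also have "\<dots> = poly (smult (4^n) (monom 1 n * Mob (k-1) q)) y"
    using poly_Mob[OF assms(1) y] unfolding x_def by (simp add: poly_monom)
  finally show "poly (Mob N (q * [:1,0,-1:]^n)) y = poly (smult (4^n) (monom 1 n * Mob (k-1) q)) y" .
qed

lemma coeff_Mob_w: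
  fixes q :: "real poly"
  assumes "degree q \<le> k - 1" "N = 2*n+k-1" "1 \<le> k" "e < n \<or> n + k \<le> e"
  shows "coeff (Mob N (q * [:1,0,-1:]^n)) e = 0"
proof -
  have "e < n \<or> k - 1 < e - n" using assms(3,4) by auto
  then show ?thesis
    unfolding Mob_w[OF assms(1-3)] coeff_smult coeff_monom_mult
    using degree_Mob[of "k-1" q] by (auto intro: coeff_eq_0)
qed


lemma mp1: fixes t::real assumes "0<t" "t<1" shows "(1 - (1-t)/(1+t))/(1 + (1-t)/(1+t)) = t"
proof -
  have a: "1 - (1-t)/(1+t) = 2*t/(1+t)" using assms by (simp add: field_simps)
  have b: "1 + (1-t)/(1+t) = 2/(1+t)" using assms by (simp add: field_simps)
  show ?thesis unfolding a b using assms by simp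
qed
lemma mp2: fixes t::real assumes "0<t" "t<1" shows "(1 - (1+t)/(1-t))/(1 + (1+t)/(1-t)) = -t"
proof -
  have a: "1 - (1+t)/(1-t) = -2*t/(1-t)" using assms by (simp add: field_simps)
  have b: "1 + (1+t)/(1-t) = 2/(1-t)" using assms by (simp add: field_simps)
  show ?thesis unfolding a b using assms by simp
qed
lemma r1: fixes t::real assumes "0<t" "t<1" shows "0 < (1-t)/(1+t)" "(1-t)/(1+t) < 1"
  using assms by (auto simp: pos_divide_less_eq)
lemma r2: fixes t::real assumes "0<t" "t<1" shows "1 < (1+t)/(1-t)"
  using assms by (auto simp: pos_less_divide_eq)
lemma i1: fixes a b::real assumes "0<a" "0<b" "(1 - a)/(1 + a) = (1 - b)/(1 + b)" shows "a = b"
proof -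
  have "(1 - a) * (1 + b) = (1 - b) * (1 + a)" using assms by (simp add: divide_eq_eq)
  then show ?thesis by (simp add: algebra_simps)
qed
lemma i2: fixes a b::real assumes "a<1" "b<1" "(1 + a)/(1 - a) = (1 + b)/(1 - b)" shows "a = b"
proof -
  have "(1 + a) * (1 - b) = (1 + b) * (1 - a)" using assms by (simp add: divide_eq_eq)
  then show ?thesis by (simp add: algebra_simps)
qed

lemma poly_if0: "poly (if b then a else 0) x = (if b then poly a x else 0)"
  by simp

lemma poly_even_odd: "poly (poly_even p) x + poly (poly_odd p) x = poly p (x::real)"
proof -
  have "poly (poly_even p) x + poly (poly_odd p) x =
      (\<Sum>j\<le>degree p. (if even j then coeff p j * x^j else 0) + (if odd j then coeff p j * x^j else 0))"
    by (simp add: poly_even_def poly_odd_def poly_sum sum.distrib[symmetric] poly_if0)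
       (intro sum.cong refl, simp add: poly_monom)
  also have "\<dots> = (\<Sum>j\<le>degree p. coeff p j * x^j)" by (intro sum.cong) auto
  finally show ?thesis by (simp add: poly_altdef)
qed

lemma poly_even_neg: "poly (poly_even p) (-x) = poly (poly_even p) (x::real)"
  by (auto simp: poly_even_def poly_sum poly_if0 poly_monom intro!: sum.cong)

lemma poly_odd_neg: "poly (poly_odd p) (-x) = - poly (poly_odd p) (x::real)"
  by (auto simp: poly_odd_def poly_sum poly_if0 poly_monom sum_negf[symmetric] intro!: sum.cong)

theorem proposition2p5:
  fixes m k :: nat and p q :: "real poly" and t :: "nat \<Rightarrow> real"
  assumes "1 \<le> k" and "k \<le> m"
    and "degree p \<le> 2 * m - k - 1"
    and "degree q \<le> k - 1"
    and "inj_on t {1..m}"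
    and "\<And>i. i \<in> {1..m} \<Longrightarrow> 0 < t i \<and> t i < 1"
    and "\<And>i. i \<in> {1..m} \<Longrightarrow>
           poly (poly_even p) (t i) + poly (poly_odd q) (t i) * (1 - (t i)\<^sup>2) ^ (m - k) = 0"
    and "\<And>i. i \<in> {1..m} \<Longrightarrow>
           poly (poly_odd p) (t i) + poly (poly_even q) (t i) * (1 - (t i)\<^sup>2) ^ (m - k) = 0"
  shows "p = 0 \<and> q = 0"
proof -
  define n where "n = m - k"
  define N where "N = 2*n+k-1"
  have NN: "2 * m - k - 1 = N" unfolding N_def n_def using assms(1,2) by simp
  have mnk: "m = n + k" unfolding n_def using assms(2) by simp
  define w where "w = [:1,0,-1::real:]^n"
  have pw: "poly w x = (1 - x^2)^n" for x by (simp add: w_def power2_eq_square)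
  have dw: "degree w \<le> 2 * n"
    using degree_power_le[of "[:1,0,-1::real:]" n] by (simp add: w_def)
  have dqw: "degree (q * w) \<le> N"
    using degree_mult_le[of q w] dw assms(4) assms(1) unfolding N_def by linarith
  have dp: "degree p \<le> N" using assms(3) NN by simp
  define f1 where "f1 = p + q * w"
  define f2 where "f2 = p - q * w"
  have df1: "degree f1 \<le> N" unfolding f1_def using dp dqw by (meson degree_add_le)
  have df2: "degree f2 \<le> N" unfolding f2_def using dp dqw by (meson degree_diff_le)
  define F where "F = Mob N f1"
  define G where "G = Mob N f2"
  have cFG: "coeff F e = coeff G e" if "e < n \<or> n + k \<le> e" for e
  proof -
    have "coeff (Mob N (q * w)) e = 0"
      unfolding w_def by (rule coeff_Mob_w[OF assms(4) N_def assms(1) that])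
    then show ?thesis unfolding F_def G_def f1_def f2_def Mob_add Mob_diff by simp
  qed
  have key1: "poly p (t i) + poly q (t i) * (1 - (t i)^2)^n = 0" if "i \<in> {1..m}" for i
  proof -
    have "poly p (t i) + poly q (t i) * (1 - (t i)^2)^n =
      (poly (poly_even p) (t i) + poly (poly_odd q) (t i) * (1 - (t i)\<^sup>2) ^ (m - k)) +
      (poly (poly_odd p) (t i) + poly (poly_even q) (t i) * (1 - (t i)\<^sup>2) ^ (m - k))"
      unfolding poly_even_odd[of p "t i", symmetric] poly_even_odd[of q "t i", symmetric] n_def
      by (simp add: algebra_simps)
    then show ?thesis using assms(7)[OF that] assms(8)[OF that] by simp
  qed
  have key2: "poly p (- t i) - poly q (- t i) * (1 - (t i)^2)^n = 0" if "i \<in> {1..m}" for i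
  proof -
    have "poly p (- t i) - poly q (- t i) * (1 - (t i)^2)^n =
      (poly (poly_even p) (t i) + poly (poly_odd q) (t i) * (1 - (t i)\<^sup>2) ^ (m - k)) -
      (poly (poly_odd p) (t i) + poly (poly_even q) (t i) * (1 - (t i)\<^sup>2) ^ (m - k))"
      unfolding poly_even_odd[of p "- t i", symmetric] poly_even_odd[of q "- t i", symmetric] n_def
        poly_even_neg poly_odd_neg
      by (simp add: algebra_simps)
    then show ?thesis using assms(7)[OF that] assms(8)[OF that] by simp
  qed
  define R1 where "R1 = (\<lambda>i. (1 - t i)/(1 + t i)) ` {1..m}"
  define R2 where "R2 = (\<lambda>i. (1 + t i)/(1 - t i)) ` {1..m}"
  have inj1: "inj_on (\<lambda>i. (1 - t i)/(1 + t i)) {1..m}"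
  proof (rule inj_onI)
    fix i j assume ij: "i \<in> {1..m}" "j \<in> {1..m}" "(1 - t i)/(1 + t i) = (1 - t j)/(1 + t j)"
    have "0 < t i" "0 < t j" using assms(6) ij(1,2) by auto
    then have "t i = t j" using i1[OF _ _ ij(3)] by simp
    then show "i = j" using inj_on_eq_iff[OF assms(5) ij(1,2)] by simp
  qed
  have inj2: "inj_on (\<lambda>i. (1 + t i)/(1 - t i)) {1..m}"
  proof (rule inj_onI)
    fix i j assume ij: "i \<in> {1..m}" "j \<in> {1..m}" "(1 + t i)/(1 - t i) = (1 + t j)/(1 - t j)"
    have "t i < 1" "t j < 1" using assms(6) ij(1,2) by auto
    then have "t i = t j" using i2[OF _ _ ij(3)] by simp
    then show "i = j" using inj_on_eq_iff[OF assms(5) ij(1,2)] by simp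
  qed
  have cR1: "card R1 = n + k" unfolding R1_def using card_image[OF inj1] mnk by simp
  have cR2: "card R2 = n + k" unfolding R2_def using card_image[OF inj2] mnk by simp
  have sR1: "R1 \<subseteq> {0<..<1}"
  proof
    fix y assume "y \<in> R1"
    then obtain i where i: "i \<in> {1..m}" "y = (1 - t i)/(1 + t i)" unfolding R1_def by auto
    have ti: "0 < t i" "t i < 1" using assms(6)[OF i(1)] by auto
    show "y \<in> {0<..<1}" using r1[OF ti] i(2) by simp
  qed
  have sR2: "R2 \<subseteq> {1<..}"
  proof
    fix y assume "y \<in> R2"
    then obtain i where i: "i \<in> {1..m}" "y = (1 + t i)/(1 - t i)" unfolding R2_def by auto
    have ti: "0 < t i" "t i < 1" using assms(6)[OF i(1)] by auto
    show "y \<in> {1<..}" using r2[OF ti] i(2) by simp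
  qed
  have rR1: "\<forall>y\<in>R1. poly F y = 0"
  proof
    fix y assume "y \<in> R1"
    then obtain i where i: "i \<in> {1..m}" "y = (1 - t i)/(1 + t i)" unfolding R1_def by auto
    have ti: "0 < t i" "t i < 1" using assms(6)[OF i(1)] by auto
    have y1: "y \<noteq> -1" using r1[OF ti] i(2) by auto
    have "(1 - y)/(1 + y) = t i" using mp1[OF ti] i(2) by simp
    then show "poly F y = 0" unfolding F_def poly_Mob[OF df1 y1]
      using key1[OF i(1)] by (simp add: f1_def pw)
  qed
  have rR2: "\<forall>y\<in>R2. poly G y = 0"
  proof
    fix y assume "y \<in> R2"
    then obtain i where i: "i \<in> {1..m}" "y = (1 + t i)/(1 - t i)" unfolding R2_def by auto
    have ti: "0 < t i" "t i < 1" using assms(6)[OF i(1)] by auto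
    have y1: "y \<noteq> -1" using r2[OF ti] i(2) by auto
    have "(1 - y)/(1 + y) = - t i" using mp2[OF ti] i(2) by simp
    then show "poly G y = 0" unfolding G_def poly_Mob[OF df2 y1]
      using key2[OF i(1)] by (simp add: f2_def pw)
  qed
  have fin1: "finite R1" "finite R2" unfolding R1_def R2_def by auto
  have dF: "degree F \<le> 2*n+k-1" using degree_Mob[of N f1] unfolding F_def N_def .
  have dG: "degree G \<le> 2*n+k-1" using degree_Mob[of N f2] unfolding G_def N_def .
  have FG: "F = 0 \<and> G = 0"
    by (rule core[OF assms(1) dF dG cFG fin1(1) cR1 sR1 rR1 fin1(2) cR2 sR2 rR2])
  have f10: "f1 = 0" using Mob_inj[OF df1] FG unfolding F_def by simp
  have f20: "f2 = 0" using Mob_inj[OF df2] FG unfolding G_def by simp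
  have p0: "p = 0"
  proof -
    have s2: "smult (1 + 1) p = p + p" by (simp only: smult_add_left smult_1_left)
    have "f1 + f2 = p + p" unfolding f1_def f2_def by simp
    then have "smult (1 + 1) p = 0" using f10 f20 s2 by simp
    then show ?thesis by simp
  qed
  have "q * w = 0" using f10 p0 unfolding f1_def by simp
  moreover have "w \<noteq> 0" unfolding w_def by simp
  ultimately have "q = 0" by simp
  then show ?thesis using p0 by simp
qed

end
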